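(* Let $d\ge 1$ and $h\ge 1$ be integers, let $T$ be the complete $d$-ary tree of height $h$, and let $v$ be a leaf of $T$. For every integer $0\le l\le h$, the hitting time from the ancestor of $v$ at distance $l$ from $v$ to $v$ is $g_{h,h}(d)-g_{h,h-l}(d)$.
   Context: The complete $d$-ary tree of height $h$ is the rooted tree in which every vertex at depth less than $h$ has exactly $d$ children and every vertex at depth $h$ is a leaf; the ancestors of $v$ are the vertices on the path from $v$ to the root (including $v$). For a positive integer $k$ and nonnegative integer $m$ define $g_{k,0}(d)=0$ and, for $m\ge 1$, $g_{k,m}(d)=\left(\sum_{i=0}^{m-1}(2m-2i)d^{k-i}\right)-m$. A simple random walk moves at each step to a uniformly random neighbor; the hitting time from $x$ to $y$ is the expected number of steps for a simple random walk started at $x$ to first reach $y$. *)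

theory Defs
  imports Complex_Main
begin

text \<open>Complete d-ary tree of height h: vertices are words over {0..<d} of length at most h;
  the root is the empty word, the children of u are u @ [i], leaves are words of length h.\<close>
definition tree_verts :: "nat \<Rightarrow> nat \<Rightarrow> nat list set" where
  "tree_verts d h = {u. set u \<subseteq> {..<d} \<and> length u \<le> h}"

definition tree_nbrs :: "nat \<Rightarrow> nat \<Rightarrow> nat list \<Rightarrow> nat list set" where
  "tree_nbrs d h u = {w \<in> tree_verts d h. (u \<noteq> [] \<and> w = butlast u) \<or> (\<exists>i<d. w = u @ [i])}"

definition srw_trans :: "nat \<Rightarrow> nat \<Rightarrow> nat list \<Rightarrow> nat list \<Rightarrow> real" where
  "srw_trans d h u w = (if w \<in> tree_nbrs d h u then 1 / real (card (tree_nbrs d h u)) else 0)"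

definition walk_prob :: "nat \<Rightarrow> nat \<Rightarrow> nat list list \<Rightarrow> real" where
  "walk_prob d h ws = (\<Prod>i<length ws - 1. srw_trans d h (ws ! i) (ws ! Suc i))"

definition first_hit_prob :: "nat \<Rightarrow> nat \<Rightarrow> nat list \<Rightarrow> nat list \<Rightarrow> nat \<Rightarrow> real" where
  "first_hit_prob d h x y n =
     (\<Sum>ws \<in> {ws. length ws = Suc n \<and> set ws \<subseteq> tree_verts d h \<and> hd ws = x \<and> last ws = y
                 \<and> y \<notin> set (take n ws)}. walk_prob d h ws)"

definition hitting_time :: "nat \<Rightarrow> nat \<Rightarrow> nat list \<Rightarrow> nat list \<Rightarrow> real" where
  "hitting_time d h x y = (\<Sum>n. real n * first_hit_prob d h x y n)"

definition g_fun :: "nat \<Rightarrow> nat \<Rightarrow> real \<Rightarrow> real" where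
  "g_fun k m d = (if m = 0 then 0 else
     (\<Sum>i<m. real (2*m - 2*i) * d powi (int k - int i)) - real m)"

end

theory Submission
  imports Defs
begin


locale hchain =
  fixes V :: "'a set" and P :: "'a \<Rightarrow> 'a \<Rightarrow> real" and v :: 'a
    and fh :: "nat \<Rightarrow> 'a \<Rightarrow> real" and F :: "'a \<Rightarrow> real"
  assumes finV: "finite V" and vV: "v \<in> V"
  and Pnn: "\<And>x w. P x w \<ge> 0"
  and Psum: "\<And>x. x \<in> V \<Longrightarrow> (\<Sum>w\<in>V. P x w) = 1"
  and fh0: "\<And>x. x \<in> V \<Longrightarrow> fh 0 x = (if x = v then 1 else 0)"
  and fhS: "\<And>x n. x \<in> V \<Longrightarrow> fh (Suc n) x = (if x = v then 0 else (\<Sum>w\<in>V. P x w * fh n w))"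
  and fhnn: "\<And>x n. x \<in> V \<Longrightarrow> fh n x \<ge> 0"
  and Fv: "F v = 0" and Fnn: "\<And>x. x \<in> V \<Longrightarrow> F x \<ge> 0"
  and Feq: "\<And>x. x \<in> V \<Longrightarrow> x \<noteq> v \<Longrightarrow> F x = 1 + (\<Sum>w\<in>V. P x w * F w)"
begin

fun Q :: "nat \<Rightarrow> 'a \<Rightarrow> real" where
  "Q 0 x = (if x = v then 0 else 1)"
| "Q (Suc n) x = (if x = v then 0 else (\<Sum>w\<in>V. P x w * Q n w))"

fun R :: "nat \<Rightarrow> 'a \<Rightarrow> real" where
  "R 0 x = F x"
| "R (Suc n) x = (if x = v then 0 else (\<Sum>w\<in>V. P x w * R n w))"

lemma Qv: "Q n v = 0" by (cases n) auto

lemma fh_Q: "x \<in> V \<Longrightarrow> x \<noteq> v \<Longrightarrow> fh (Suc n) x = Q n x - Q (Suc n) x"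
proof (induction n arbitrary: x)
  case 0
  have a: "fh (Suc 0) x = (\<Sum>w\<in>V. P x w * (if w = v then 1 else 0))"
    using 0 by (simp add: fhS fh0 cong: sum.cong)
  have b: "Q (Suc 0) x = (\<Sum>w\<in>V. P x w * (if w = v then 0 else 1))" using 0 by simp
  have "(\<Sum>w\<in>V. P x w * (if w = v then 1 else 0)) + (\<Sum>w\<in>V. P x w * (if w = v then 0 else 1))
      = (\<Sum>w\<in>V. P x w)"
    by (subst sum.distrib[symmetric]) (rule sum.cong, auto)
  then show ?case using Psum[OF 0(1)] a b 0 by simp
next
  case (Suc n)
  have "fh (Suc (Suc n)) x = (\<Sum>w\<in>V. P x w * fh (Suc n) w)" using Suc.prems by (simp add: fhS)
  also have "\<dots> = (\<Sum>w\<in>V. P x w * (Q n w - Q (Suc n) w))"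
  proof (rule sum.cong)
    fix w assume w: "w \<in> V"
    show "P x w * fh (Suc n) w = P x w * (Q n w - Q (Suc n) w)"
    proof (cases "w = v")
      case True then show ?thesis using w by (simp add: fhS Qv del: Q.simps)
    next
      case False then show ?thesis using w Suc.IH by simp
    qed
  qed simp
  also have "\<dots> = (\<Sum>w\<in>V. P x w * Q n w) - (\<Sum>w\<in>V. P x w * Q (Suc n) w)"
    by (simp add: right_diff_distrib sum_subtractf)
  also have "\<dots> = Q (Suc n) x - Q (Suc (Suc n)) x" using Suc.prems by simp
  finally show ?case .
qed

lemma Q_nn: "x \<in> V \<Longrightarrow> Q n x \<ge> 0"
  by (induction n arbitrary: x) (auto intro!: sum_nonneg mult_nonneg_nonneg Pnn)

lemma Q_dec: "x \<in> V \<Longrightarrow> Q (Suc n) x \<le> Q n x"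
proof (cases "x = v")
  case True then show ?thesis by (simp add: Qv del: Q.simps)
next
  case False
  assume x: "x \<in> V"
  show ?thesis using fh_Q[OF x False, of n] fhnn[OF x, of "Suc n"] by simp
qed

lemma Q_mono: "x \<in> V \<Longrightarrow> k \<le> N \<Longrightarrow> Q N x \<le> Q k x"
  using lift_Suc_antimono_le[of "\<lambda>n. Q n x"] Q_dec by blast

lemma F_split: "x \<in> V \<Longrightarrow> F x = (\<Sum>k<N. Q k x) + R N x"
proof (induction N arbitrary: x)
  case 0 then show ?case by simp
next
  case (Suc N)
  show ?case
  proof (cases "x = v")
    case True then show ?thesis by (simp add: Fv Qv del: Q.simps)
  next
    case False
    have "F x = 1 + (\<Sum>w\<in>V. P x w * ((\<Sum>k<N. Q k w) + R N w))"
      using Feq[OF Suc.prems False] Suc.IH by (simp cong: sum.cong)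
    also have "\<dots> = 1 + (\<Sum>w\<in>V. \<Sum>k<N. P x w * Q k w) + (\<Sum>w\<in>V. P x w * R N w)"
      by (simp add: distrib_left sum.distrib sum_distrib_left)
    also have "\<dots> = 1 + (\<Sum>k<N. \<Sum>w\<in>V. P x w * Q k w) + (\<Sum>w\<in>V. P x w * R N w)"
      by (simp add: sum.swap[of _ V])
    also have "\<dots> = (\<Sum>k<Suc N. Q k x) + R (Suc N) x"
      using False by (simp add: sum.lessThan_Suc_shift del: sum.lessThan_Suc)
    finally show ?thesis .
  qed
qed

lemma R_nn: "x \<in> V \<Longrightarrow> R N x \<ge> 0"
  by (induction N arbitrary: x) (auto intro!: sum_nonneg mult_nonneg_nonneg Pnn Fnn)

definition "B = (\<Sum>w\<in>V. F w)"

lemma R_le: "x \<in> V \<Longrightarrow> R N x \<le> B * Q N x"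
proof (induction N arbitrary: x)
  case 0
  then show ?case
    using member_le_sum[of x V F] Fnn finV by (auto simp: B_def Fv)
next
  case (Suc N)
  show ?case
  proof (cases "x = v")
    case True then show ?thesis by simp
  next
    case False
    have "R (Suc N) x \<le> (\<Sum>w\<in>V. P x w * (B * Q N w))"
      using False by (simp, intro sum_mono mult_left_mono Suc.IH Pnn)
    also have "\<dots> = B * Q (Suc N) x" using False
      by (simp add: sum_distrib_left mult.commute mult.left_commute)
    finally show ?thesis .
  qed
qed

lemma E_le: "x \<in> V \<Longrightarrow> (\<Sum>k<N. Q k x) \<le> F x"
  using F_split[of x N] R_nn[of x N] by simp

lemma NQ_le: "x \<in> V \<Longrightarrow> real N * Q N x \<le> (\<Sum>k<N. Q k x)"
proof -
  assume x: "x \<in> V"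
  have "(\<Sum>k<N. Q N x) \<le> (\<Sum>k<N. Q k x)" by (rule sum_mono) (use Q_mono[OF x] in auto)
  then show ?thesis by simp
qed

lemma Q_lim: "x \<in> V \<Longrightarrow> (\<lambda>N. Q N x) \<longlonglongrightarrow> 0"
proof -
  assume x: "x \<in> V"
  have up: "\<forall>\<^sub>F N in sequentially. Q N x \<le> F x / real N"
  proof (rule eventually_sequentiallyI[of 1])
    fix N :: nat assume "1 \<le> N"
    then have "real N > 0" by simp
    then show "Q N x \<le> F x / real N"
      using NQ_le[OF x, of N] E_le[OF x, of N] by (simp add: field_simps)
  qed
  have lo: "\<forall>\<^sub>F N in sequentially. 0 \<le> Q N x" using Q_nn[OF x] by simp
  show ?thesis
    by (rule real_tendsto_sandwich[OF lo up tendsto_const lim_const_over_n])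
qed

lemma E_lim: "x \<in> V \<Longrightarrow> (\<lambda>N. \<Sum>k<N. Q k x) \<longlonglongrightarrow> F x"
proof -
  assume x: "x \<in> V"
  have "(\<lambda>N. R N x) \<longlonglongrightarrow> 0"
  proof (rule real_tendsto_sandwich)
    show "\<forall>\<^sub>F N in sequentially. 0 \<le> R N x" using R_nn[OF x] by simp
    show "\<forall>\<^sub>F N in sequentially. R N x \<le> B * Q N x" using R_le[OF x] by simp
    show "(\<lambda>N. 0::real) \<longlonglongrightarrow> 0" by simp
    show "(\<lambda>N. B * Q N x) \<longlonglongrightarrow> 0" using tendsto_mult[OF tendsto_const Q_lim[OF x], of B] by simp
  qed
  then have "(\<lambda>N. F x - R N x) \<longlonglongrightarrow> F x - 0" by (intro tendsto_intros)
  moreover have "(\<lambda>N. F x - R N x) = (\<lambda>N. \<Sum>k<N. Q k x)" using F_split[OF x] by (auto simp: fun_eq_iff algebra_simps)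
  ultimately show ?thesis by simp
qed

lemma NQ_lim: "x \<in> V \<Longrightarrow> (\<lambda>N. real N * Q N x) \<longlonglongrightarrow> 0"
proof -
  assume x: "x \<in> V"
  define E where "E N = (\<Sum>k<N. Q k x)" for N
  have C: "Cauchy E" unfolding E_def by (rule LIMSEQ_imp_Cauchy[OF E_lim[OF x]])
  show ?thesis
  proof (rule LIMSEQ_I)
    fix e :: real assume e: "0 < e"
    obtain M where M: "\<And>m n. m \<ge> M \<Longrightarrow> n \<ge> M \<Longrightarrow> norm (E m - E n) < e/2"
      using CauchyD[OF C, of "e/2"] e by auto
    show "\<exists>no. \<forall>N\<ge>no. norm (real N * Q N x - 0) < e"
    proof (intro exI allI impI)
      fix N assume N: "2*M \<le> N"
      define m where "m = N div 2"
      have mM: "m \<ge> M" using N by (simp add: m_def)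
      have mN: "m \<le> N" by (simp add: m_def)
      have "(\<Sum>k\<in>{m..<N}. Q N x) \<le> (\<Sum>k\<in>{m..<N}. Q k x)"
        by (rule sum_mono) (use Q_mono[OF x] in auto)
      also have "\<dots> = E N - E m" unfolding E_def
        using sum.atLeastLessThan_concat[of 0 m N "\<lambda>k. Q k x"] mN
        by (simp add: atLeast0LessThan)
      finally have a: "real (N - m) * Q N x \<le> E N - E m" by simp
      have b: "real N \<le> 2 * real (N - m)" using mN by (simp add: m_def)
      have "real N * Q N x \<le> 2 * real (N - m) * Q N x"
        using b Q_nn[OF x, of N] by (simp add: mult_right_mono)
      also have "\<dots> \<le> 2 * (E N - E m)" using a by simp
      also have "\<dots> < e" proof -
        have "norm (E N - E m) < e/2" using M[OF _ mM, of N] mM N by auto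
        then show ?thesis using abs_ge_self[of "E N - E m"] by simp
      qed
      finally show "norm (real N * Q N x - 0) < e" using Q_nn[OF x, of N] by simp
    qed
  qed
qed

lemma main_sums: "x \<in> V \<Longrightarrow> (\<lambda>n. real n * fh n x) sums F x"
proof -
  assume x: "x \<in> V"
  show ?thesis
  proof (cases "x = v")
    case True
    have "(\<lambda>n. real n * fh n x) = (\<lambda>n. 0)"
    proof
      fix n show "real n * fh n x = 0" using True vV by (cases n) (auto simp: fh0 fhS)
    qed
    then show ?thesis using True Fv by simp
  next
    case False
    have part: "(\<Sum>n<Suc M. real n * fh n x) = (\<Sum>k<M. Q k x) - real M * Q M x" for M
    proof (induction M)
      case 0 then show ?case by simp
    next
      case (Suc M)
      have "(\<Sum>n<Suc (Suc M). real n * fh n x) = (\<Sum>k<M. Q k x) - real M * Q M x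
              + real (Suc M) * (Q M x - Q (Suc M) x)"
        using Suc.IH fh_Q[OF x False, of M] by simp
      then show ?case by (simp add: algebra_simps)
    qed
    have "(\<lambda>M. (\<Sum>k<M. Q k x) - real M * Q M x) \<longlonglongrightarrow> F x - 0"
      by (intro tendsto_diff E_lim[OF x] NQ_lim[OF x])
    then have "(\<lambda>M. \<Sum>n<Suc M. real n * fh n x) \<longlonglongrightarrow> F x" using part by simp
    then show ?thesis unfolding sums_def by (rule filterlim_sequentially_Suc[THEN iffD1])
  qed
qed

end


lemma finite_V: "finite (tree_verts d h)"
proof -
  have "tree_verts d h = {xs. set xs \<subseteq> {..<d} \<and> length xs \<le> h}" by (simp add: tree_verts_def)
  then show ?thesis using finite_lists_length_le[of "{..<d}" h] by simp
qed

definition paths :: "nat \<Rightarrow> nat \<Rightarrow> nat list \<Rightarrow> nat list \<Rightarrow> nat \<Rightarrow> nat list list set" where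
 "paths d h x y n = {ws. length ws = Suc n \<and> set ws \<subseteq> tree_verts d h \<and> hd ws = x \<and> last ws = y
                 \<and> y \<notin> set (take n ws)}"

lemma fhp_paths: "first_hit_prob d h x y n = (\<Sum>ws\<in>paths d h x y n. walk_prob d h ws)"
  by (simp add: first_hit_prob_def paths_def)

lemma finite_paths: "finite (paths d h x y n)"
proof (rule finite_subset)
  show "paths d h x y n \<subseteq> {ws. set ws \<subseteq> tree_verts d h \<and> length ws = Suc n}"
    by (auto simp: paths_def)
  show "finite \<dots>" by (rule finite_lists_length_eq[OF finite_V])
qed

lemma fhp0: "x \<in> tree_verts d h \<Longrightarrow> first_hit_prob d h x y 0 = (if x = y then 1 else 0)"
proof -
  assume x: "x \<in> tree_verts d h"
  have "paths d h x y 0 = (if x = y then {[x]} else {})"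
    using x by (auto simp: paths_def length_Suc_conv)
  then show ?thesis by (simp add: fhp_paths walk_prob_def)
qed

lemma walk_prob_Cons: "ws \<noteq> [] \<Longrightarrow> walk_prob d h (x # ws) = srw_trans d h x (hd ws) * walk_prob d h ws"
proof -
  assume "ws \<noteq> []"
  then obtain m where m: "length ws = Suc m" by (cases ws) auto
  have "walk_prob d h (x # ws) = (\<Prod>i<Suc m. srw_trans d h ((x#ws) ! i) ((x#ws) ! Suc i))"
    by (simp add: walk_prob_def m)
  also have "\<dots> = srw_trans d h x (ws ! 0) * (\<Prod>i<m. srw_trans d h (ws ! i) (ws ! Suc i))"
    by (simp add: prod.lessThan_Suc_shift del: prod.lessThan_Suc)
  also have "\<dots> = srw_trans d h x (hd ws) * walk_prob d h ws"
    using \<open>ws \<noteq> []\<close> m by (simp add: walk_prob_def hd_conv_nth)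
  finally show ?thesis .
qed

lemma fhpS: "x \<in> tree_verts d h \<Longrightarrow> first_hit_prob d h x y (Suc n) =
   (if x = y then 0 else (\<Sum>w\<in>tree_verts d h. srw_trans d h x w * first_hit_prob d h w y n))"
proof -
  assume x: "x \<in> tree_verts d h"
  show ?thesis
  proof (cases "x = y")
    case True
    have "paths d h x y (Suc n) = {}"
      using True by (auto simp: paths_def length_Suc_conv)
    then show ?thesis using True by (simp add: fhp_paths)
  next
    case False
    let ?V = "tree_verts d h"
    have eq: "paths d h x y (Suc n) = (\<lambda>ws. x # ws) ` (\<Union>w\<in>?V. paths d h w y n)"
    proof
      show "paths d h x y (Suc n) \<subseteq> (\<lambda>ws. x # ws) ` (\<Union>w\<in>?V. paths d h w y n)"
      proof
        fix ws assume ws: "ws \<in> paths d h x y (Suc n)"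
        then obtain a ws' where ws': "ws = a # ws'" "length ws' = Suc n"
          by (auto simp: paths_def length_Suc_conv)
        then have "ws' \<noteq> []" by auto
        then have "hd ws' \<in> set ws'" by simp
        have "ws' \<in> paths d h (hd ws') y n" "hd ws' \<in> ?V" "ws = x # ws'"
          using ws ws' \<open>ws' \<noteq> []\<close> \<open>hd ws' \<in> set ws'\<close> by (auto simp: paths_def)
        then show "ws \<in> (\<lambda>ws. x # ws) ` (\<Union>w\<in>?V. paths d h w y n)"
          by blast
      qed
    next
      show "(\<lambda>ws. x # ws) ` (\<Union>w\<in>?V. paths d h w y n) \<subseteq> paths d h x y (Suc n)"
        using x False by (auto simp: paths_def)
    qed
    have "first_hit_prob d h x y (Suc n) = (\<Sum>ws\<in>(\<Union>w\<in>?V. paths d h w y n). walk_prob d h (x # ws))"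
      by (simp add: fhp_paths eq sum.reindex)
    also have "\<dots> = (\<Sum>w\<in>?V. \<Sum>ws\<in>paths d h w y n. walk_prob d h (x # ws))"
      by (rule sum.UNION_disjoint) (auto simp: finite_V finite_paths, auto simp: paths_def)
    also have "\<dots> = (\<Sum>w\<in>?V. srw_trans d h x w * first_hit_prob d h w y n)"
    proof (rule sum.cong)
      fix w assume "w \<in> ?V"
      have "(\<Sum>ws\<in>paths d h w y n. walk_prob d h (x # ws)) =
            (\<Sum>ws\<in>paths d h w y n. srw_trans d h x w * walk_prob d h ws)"
      proof (rule sum.cong)
        fix ws assume "ws \<in> paths d h w y n"
        then have "ws \<noteq> []" "hd ws = w" by (auto simp: paths_def)
        then show "walk_prob d h (x # ws) = srw_trans d h x w * walk_prob d h ws"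
          by (simp add: walk_prob_Cons)
      qed simp
      then show "(\<Sum>ws\<in>paths d h w y n. walk_prob d h (x # ws)) = srw_trans d h x w * first_hit_prob d h w y n"
        by (simp add: fhp_paths sum_distrib_left)
    qed simp
    finally show ?thesis using False by simp
  qed
qed

lemma walk_prob_nn: "walk_prob d h ws \<ge> 0"
  by (auto simp: walk_prob_def srw_trans_def intro!: prod_nonneg)

lemma fhp_nn: "first_hit_prob d h x y n \<ge> 0"
  by (auto simp: fhp_paths intro!: sum_nonneg walk_prob_nn)



fun lcp :: "nat list \<Rightarrow> nat list \<Rightarrow> nat" where
  "lcp (a#as) (b#bs) = (if a = b then Suc (lcp as bs) else 0)"
| "lcp _ _ = 0"

lemma lcp_le: "lcp u v \<le> length u"
  by (induction u v rule: lcp.induct) auto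

lemma lcp_take: "m \<le> length v \<Longrightarrow> lcp (take m v) v = m"
  by (induction v arbitrary: m) (auto simp: take_Cons split: nat.splits)

lemma lcp_full: "lcp u v = length u \<Longrightarrow> u = take (length u) v"
  by (induction u v rule: lcp.induct) (auto split: if_splits)

lemma lcp_append: "lcp (u @ w) v = (if lcp u v = length u then length u + lcp w (drop (length u) v) else lcp u v)"
  by (induction u v rule: lcp.induct) auto

lemma lcp_snoc: "lcp (u @ [i]) v = (if lcp u v = length u \<and> length u < length v \<and> v ! length u = i
   then Suc (length u) else lcp u v)"
proof -
  have "lcp [i] (drop (length u) v) = (if length u < length v \<and> v ! length u = i then 1 else 0)"
  proof (cases "length u < length v")
    case True
    then have "drop (length u) v = v ! length u # drop (Suc (length u)) v" by (simp add: Cons_nth_drop_Suc)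
    then show ?thesis using True by simp
  next
    case False then show ?thesis by simp
  qed
  then show ?thesis by (simp add: lcp_append)
qed

lemma lcp_butlast: "u \<noteq> [] \<Longrightarrow> lcp (butlast u) v = min (lcp u v) (length u - 1)"
proof -
  assume u: "u \<noteq> []"
  let ?b = "butlast u"
  have uu: "u = ?b @ [last u]" using u by simp
  have l: "length u = Suc (length ?b)" using u by simp
  have e: "lcp u v = (if lcp ?b v = length ?b \<and> length ?b < length v \<and> v ! length ?b = last u
   then Suc (length ?b) else lcp ?b v)" using lcp_snoc[of ?b "last u" v] by (simp only: uu[symmetric])
  show ?thesis
  proof (cases "lcp ?b v = length ?b \<and> length ?b < length v \<and> v ! length ?b = last u")
    case True
    then have "lcp u v = Suc (length ?b)" by (simp only: e if_P if_True)
    then show ?thesis using True u by simp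
  next
    case False
    then have "lcp u v = lcp ?b v" by (simp only: e if_not_P if_False)
    then show ?thesis using u lcp_le[of ?b v] by simp
  qed
qed

definition Uf :: "real \<Rightarrow> nat \<Rightarrow> nat \<Rightarrow> real" where
  "Uf r h i = 1 + 2 * (\<Sum>s<h-i. r^(s+1))"
definition Wf :: "real \<Rightarrow> nat \<Rightarrow> nat \<Rightarrow> real" where
  "Wf r h j = (\<Sum>i<j. Uf r h (Suc i))"
definition Df :: "real \<Rightarrow> nat \<Rightarrow> nat \<Rightarrow> real" where
  "Df r h i = 2 * (\<Sum>k<Suc i. r^(h-k)) - 1"
definition Af :: "real \<Rightarrow> nat \<Rightarrow> nat \<Rightarrow> real" where
  "Af r h j = (\<Sum>i\<in>{j..<h}. Df r h i)"
definition Ff :: "real \<Rightarrow> nat \<Rightarrow> nat list \<Rightarrow> nat list \<Rightarrow> real" where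
  "Ff r h v u = Af r h (lcp u v) + Wf r h (length u) - Wf r h (lcp u v)"

lemma geom: "(r - 1) * (\<Sum>s<t. r^(s+1)) = r^(Suc t) - (r::real)"
  by (induction t) (auto simp: algebra_simps)

lemma U_h: "Uf r h h = 1" by (simp add: Uf_def)

lemma U_rec: "j < h \<Longrightarrow> Uf r h j = r + 1 + r * Uf r h (Suc j)"
proof -
  assume j: "j < h"
  have hh: "h - j = Suc (h - Suc j)" using j by simp
  have "(\<Sum>s<Suc (h - Suc j). r^(s+1)) = r + r * (\<Sum>s<h - Suc j. r^(s+1))"
    by (simp add: sum.lessThan_Suc_shift sum_distrib_left del: sum.lessThan_Suc)
  then show ?thesis by (simp add: Uf_def hh algebra_simps)
qed

lemma U_geom: "j < h \<Longrightarrow> (r - 1) * Uf r h (Suc j) = r - 1 + 2 * (r^(h-j) - r)"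
proof -
  assume j: "j < h"
  have hh: "Suc (h - Suc j) = h - j" using j by simp
  have e1: "(r - 1) * Uf r h (Suc j) = r - 1 + 2 * ((r - 1) * (\<Sum>s<h - Suc j. r^(s+1)))"
    by (simp add: Uf_def algebra_simps)
  have g: "(r - 1) * (\<Sum>s<h - Suc j. r^(s+1)) = r^(h-j) - r"
    using geom[of r "h - Suc j"] hh by simp
  show ?thesis by (simp only: e1 g)
qed

lemma U_ge1: "r \<ge> 0 \<Longrightarrow> Uf r h i \<ge> 1"
  by (simp add: Uf_def sum_nonneg)

lemma W_Suc: "Wf r h (Suc j) = Wf r h j + Uf r h (Suc j)" by (simp add: Wf_def)

lemma W_mono: "r \<ge> 0 \<Longrightarrow> a \<le> j \<Longrightarrow> Wf r h a \<le> Wf r h j"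
proof -
  assume r: "r \<ge> 0"
  show "a \<le> j \<Longrightarrow> Wf r h a \<le> Wf r h j"
  proof (induction j)
    case 0 then show ?case by simp
  next
    case (Suc j)
    show ?case
    proof (cases "a = Suc j")
      case True then show ?thesis by simp
    next
      case False
      then have "Wf r h a \<le> Wf r h j" using Suc by simp
      then show ?thesis using U_ge1[OF r, of h "Suc j"] by (simp add: W_Suc)
    qed
  qed
qed

lemma A_rec: "j < h \<Longrightarrow> Af r h j = Df r h j + Af r h (Suc j)"
  by (simp add: Af_def sum.atLeast_Suc_lessThan)

lemma A_h: "Af r h h = 0" by (simp add: Af_def)

lemma D_Suc: "Df r h (Suc j) = Df r h j + 2 * r^(h - Suc j)" by (simp add: Df_def algebra_simps)
lemma D_0: "Df r h 0 = 2 * r^h - 1" by (simp add: Df_def)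

lemma D_nn: "r \<ge> 1 \<Longrightarrow> Df r h i \<ge> 0"
proof -
  assume r: "r \<ge> 1"
  have "(\<Sum>k<Suc i. r^(h-k)) \<ge> r^(h-0)"
    using member_le_sum[of 0 "{..<Suc i}" "\<lambda>k. r^(h-k)"] r by simp
  moreover have "r^h \<ge> 1" using r by simp
  ultimately show ?thesis by (simp add: Df_def)
qed

lemma A_nn: "r \<ge> 1 \<Longrightarrow> Af r h j \<ge> 0"
  by (simp add: Af_def sum_nonneg D_nn)

lemma g_D: "m \<le> h \<Longrightarrow> g_fun h m r = (\<Sum>i<m. Df r h i)"
proof (induction m)
  case 0 then show ?case by (simp add: g_fun_def)
next
  case (Suc m)
  have pw: "\<And>i. i < Suc m \<Longrightarrow> r powi (int h - int i) = r ^ (h - i)"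
    using Suc.prems by (simp add: power_int_def nat_diff_distrib)
  have "(\<Sum>i<Suc m. real (2*Suc m - 2*i) * r powi (int h - int i)) = (\<Sum>i<Suc m. real (2*Suc m - 2*i) * r^(h-i))"
    by (rule sum.cong) (simp_all add: pw)
  then have "g_fun h (Suc m) r = (\<Sum>i<Suc m. real (2*Suc m - 2*i) * r^(h-i)) - real (Suc m)"
    by (simp only: g_fun_def) simp
  also have "(\<Sum>i<Suc m. real (2*Suc m - 2*i) * r^(h-i))
       = (\<Sum>i<m. real (2*m - 2*i) * r^(h-i)) + 2 * (\<Sum>i<Suc m. r^(h-i))"
  proof -
    have "(\<Sum>i<Suc m. real (2*Suc m - 2*i) * r^(h-i)) = (\<Sum>i<Suc m. real (2*m - 2*i) * r^(h-i) + 2 * r^(h-i))"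
      by (rule sum.cong) (auto simp: of_nat_diff algebra_simps)
    also have "\<dots> = (\<Sum>i<m. real (2*m - 2*i) * r^(h-i)) + 2 * (\<Sum>i<Suc m. r^(h-i))"
      by (simp add: sum.distrib sum_distrib_left)
    finally show ?thesis .
  qed
  finally have "g_fun h (Suc m) r = ((\<Sum>i<m. real (2*m - 2*i) * r^(h-i)) - real m) + Df r h m"
    by (simp add: Df_def algebra_simps)
  moreover have "g_fun h m r = (\<Sum>i<m. real (2*m - 2*i) * r^(h-i)) - real m"
  proof (cases "m = 0")
    case True then show ?thesis by (simp add: g_fun_def)
  next
    case False
    have pw': "\<And>i. i < m \<Longrightarrow> r powi (int h - int i) = r ^ (h - i)"
      using Suc.prems by (simp add: power_int_def nat_diff_distrib)
    have "(\<Sum>i<m. real (2*m - 2*i) * r powi (int h - int i)) = (\<Sum>i<m. real (2*m - 2*i) * r^(h-i))"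
      by (rule sum.cong) (simp_all add: pw')
    then show ?thesis using False by (simp only: g_fun_def) simp
  qed
  ultimately show ?case using Suc by simp
qed

lemma A_g: "m \<le> h \<Longrightarrow> Af r h m = g_fun h h r - g_fun h m r"
proof -
  assume m: "m \<le> h"
  have "(\<Sum>i<h. Df r h i) = (\<Sum>i<m. Df r h i) + Af r h m"
    using sum.atLeastLessThan_concat[of 0 m h "Df r h"] m by (simp add: Af_def atLeast0LessThan)
  then show ?thesis using g_D[OF m] g_D[of h h r] by simp
qed



lemma nbrs_eq: "u \<in> tree_verts d h \<Longrightarrow> tree_nbrs d h u =
  (if u = [] then {} else {butlast u}) \<union> (if length u < h then (\<lambda>i. u @ [i]) ` {..<d} else {})"
  by (auto simp: tree_nbrs_def tree_verts_def dest: in_set_butlastD)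

lemma sumP: "u \<in> tree_verts d h \<Longrightarrow>
  (\<Sum>w\<in>tree_verts d h. srw_trans d h u w * g w) = (\<Sum>w\<in>tree_nbrs d h u. g w) / card (tree_nbrs d h u)"
proof -
  assume u: "u \<in> tree_verts d h"
  let ?N = "tree_nbrs d h u"
  have "(\<Sum>w\<in>tree_verts d h. srw_trans d h u w * g w) = (\<Sum>w\<in>tree_verts d h. if w \<in> ?N then g w / card ?N else 0)"
    by (rule sum.cong) (auto simp: srw_trans_def)
  also have "\<dots> = (\<Sum>w\<in>tree_verts d h \<inter> ?N. g w / card ?N)"
    by (rule sum.inter_restrict[OF finite_V, symmetric])
  also have "tree_verts d h \<inter> ?N = ?N" by (auto simp: tree_nbrs_def)
  finally show ?thesis by (simp add: sum_divide_distrib)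
qed

lemma nbrs_ne: "d \<ge> 1 \<Longrightarrow> h \<ge> 1 \<Longrightarrow> u \<in> tree_verts d h \<Longrightarrow> tree_nbrs d h u \<noteq> {}"
proof -
  assume d: "d \<ge> 1" and h: "h \<ge> 1" and u: "u \<in> tree_verts d h"
  show ?thesis
  proof (cases "u = []")
    case True
    then have "[0] \<in> tree_nbrs d h u" using d h u by (simp add: nbrs_eq)
    then show ?thesis by auto
  next
    case False
    then have "butlast u \<in> tree_nbrs d h u" using u by (simp add: nbrs_eq)
    then show ?thesis by auto
  qed
qed

lemma nbrs_fin: "finite (tree_nbrs d h u)"
  by (rule finite_subset[OF _ finite_V]) (auto simp: tree_nbrs_def)

lemma Psum1: "d \<ge> 1 \<Longrightarrow> h \<ge> 1 \<Longrightarrow> u \<in> tree_verts d h \<Longrightarrow> (\<Sum>w\<in>tree_verts d h. srw_trans d h u w) = 1"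
  using sumP[of u d h "\<lambda>_. 1"] nbrs_ne[of d h u] nbrs_fin[of d h u] by simp

lemma sum_if_const: "c < d \<Longrightarrow> (\<Sum>i<d. if i = c then a else b) = a + (real d - 1) * (b::real)"
proof -
  assume c: "c < d"
  have "(\<Sum>i<d. if i = c then a else b) = (\<Sum>i<d. b + (if i = c then a - b else 0))"
    by (rule sum.cong) auto
  also have "\<dots> = real d * b + (a - b)" using c by (simp add: sum.distrib)
  finally show ?thesis by (simp add: algebra_simps)
qed

lemma alg_B2: fixes r::real shows "r \<ge> 1 \<Longrightarrow> U1 = r+1+r*U2 \<Longrightarrow> W1 = W0 + U1 \<Longrightarrow> W2 = W1 + U2 \<Longrightarrow>
   A + W1 - Wa = 1 + ((A + W0 - Wa) + r*(A + W2 - Wa))/(r+1)"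
proof -
  assume r: "r \<ge> 1" and e: "U1 = r+1+r*U2" "W1 = W0 + U1" "W2 = W1 + U2"
  have "(r+1) * (A + W1 - Wa) = (r+1) + ((A + W0 - Wa) + r*(A + W2 - Wa))"
    using e by (simp add: algebra_simps)
  then show ?thesis using r by (simp add: field_simps)
qed

lemma harm:
  assumes d: "d \<ge> 1" and h: "h \<ge> 1" and vV: "v \<in> tree_verts d h" and lv: "length v = h"
    and u: "u \<in> tree_verts d h" and uv: "u \<noteq> v"
  shows "Ff (real d) h v u = 1 + (\<Sum>w\<in>tree_verts d h. srw_trans d h u w * Ff (real d) h v w)"
proof -
  let ?r = "real d"
  let ?F = "Ff ?r h v"
  let ?N = "tree_nbrs d h u"
  have r1: "?r \<ge> 1" using d by simp
  have S: "(\<Sum>w\<in>tree_verts d h. srw_trans d h u w * ?F w) = (\<Sum>w\<in>?N. ?F w) / card ?N"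
    by (rule sumP[OF u])
  have vd: "v ! k < d" if k: "k < h" for k
  proof -
    have "v ! k \<in> set v" using k lv by simp
    then show ?thesis using vV by (auto simp: tree_verts_def)
  qed
  have inj: "inj_on (\<lambda>i. u @ [i]) {..<d}" by (auto simp: inj_on_def)
  show ?thesis
  proof (cases "u = []")
    case True
    have N: "?N = (\<lambda>i. [i]) ` {..<d}" using True h u by (simp add: nbrs_eq)
    have cN: "card ?N = d" using N by (simp add: card_image inj_on_def)
    have Fi: "?F [i] = (if i = v ! 0 then Af ?r h 1 else Af ?r h 0 + Uf ?r h 1)" for i
      using lcp_snoc[of "[]" i v] lv h by (auto simp: Ff_def Wf_def)
    have sN: "(\<Sum>w\<in>?N. ?F w) = Af ?r h 1 + (?r - 1) * (Af ?r h 0 + Uf ?r h 1)"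
    proof -
      have "(\<Sum>w\<in>?N. ?F w) = (\<Sum>i<d. ?F [i])" unfolding N
        by (subst sum.reindex) (auto simp: inj_on_def)
      also have "\<dots> = Af ?r h 1 + (?r - 1) * (Af ?r h 0 + Uf ?r h 1)"
        using h vd[of 0] by (simp only: Fi sum_if_const)
      finally show ?thesis .
    qed
    have F0: "?F u = Af ?r h 0" using True by (simp add: Ff_def)
    have A0: "Af ?r h 0 = Df ?r h 0 + Af ?r h 1" using A_rec[of 0 h] h by simp
    have UG: "(?r - 1) * Uf ?r h 1 = ?r - 1 + 2 * (?r^h - ?r)" using U_geom[of 0 h] h by simp
    have "?F u = 1 + (Af ?r h 1 + (?r - 1) * (Af ?r h 0 + Uf ?r h 1)) / ?r"
      using r1 A0 UG by (simp add: F0 D_0 field_simps)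
    then show ?thesis using S sN cN by simp
  next
    case False
    note une = False
    obtain k where lu: "length u = Suc k" using False by (cases u) auto
    show ?thesis
    proof (cases "length u < h")
      case True
      have N: "?N = insert (butlast u) ((\<lambda>i. u @ [i]) ` {..<d})" using False True u by (simp add: nbrs_eq)
      have nb: "butlast u \<notin> (\<lambda>i. u @ [i]) ` {..<d}" using False by (auto dest: arg_cong[where f=length])
      have cN: "card ?N = Suc d" using N nb inj by (simp add: card_image)
      have sN: "(\<Sum>w\<in>?N. ?F w) = ?F (butlast u) + (\<Sum>i<d. ?F (u @ [i]))"
        using N nb inj by (simp add: sum.reindex)
      have lb: "length (butlast u) = k" using lu by simp
      show ?thesis
      proof (cases "lcp u v = length u")
        case True
        have Fb: "?F (butlast u) = Af ?r h k" using lcp_butlast[OF une, of v] True lu lb by (simp add: Ff_def)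
        have Fi: "?F (u @ [i]) = (if i = v ! Suc k then Af ?r h (Suc (Suc k)) else Af ?r h (Suc k) + Uf ?r h (Suc (Suc k)))" for i
          using lcp_snoc[of u i v] True lu lv \<open>length u < h\<close> by (auto simp: Ff_def W_Suc)
        have Fu: "?F u = Af ?r h (Suc k)" using True lu by (simp add: Ff_def)
        have ss: "(\<Sum>i<d. ?F (u @ [i])) = Af ?r h (Suc (Suc k)) + (?r - 1) * (Af ?r h (Suc k) + Uf ?r h (Suc (Suc k)))"
          using vd[of "Suc k"] \<open>length u < h\<close> lu by (simp add: Fi sum_if_const)
        have kh: "Suc k < h" using \<open>length u < h\<close> lu by simp
        have A1: "Af ?r h k = Df ?r h k + Af ?r h (Suc k)" using A_rec[of k h] kh by simp
        have A2: "Af ?r h (Suc k) = Df ?r h (Suc k) + Af ?r h (Suc (Suc k))" using A_rec[of "Suc k" h] kh by simp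
        have D2: "Df ?r h (Suc k) = Df ?r h k + 2 * ?r^(h - Suc k)" by (rule D_Suc)
        have UG: "(?r - 1) * Uf ?r h (Suc (Suc k)) = ?r - 1 + 2 * (?r^(h - Suc k) - ?r)" using U_geom[OF kh] by simp
        have "?F u = 1 + (Af ?r h k + (Af ?r h (Suc (Suc k)) + (?r - 1) * (Af ?r h (Suc k) + Uf ?r h (Suc (Suc k))))) / (?r + 1)"
          using r1 A1 A2 D2 UG Fu by (simp add: field_simps)
        then show ?thesis using S sN cN Fb ss by (simp add: add.commute)
      next
        case False
        let ?a = "lcp u v"
        have alt: "?a < length u" using False lcp_le[of u v] by simp
        have Fb: "?F (butlast u) = Af ?r h ?a + Wf ?r h k - Wf ?r h ?a"
          using lcp_butlast[OF une, of v] alt lu lb by (simp add: Ff_def)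
        have Fi: "?F (u @ [i]) = Af ?r h ?a + Wf ?r h (Suc (Suc k)) - Wf ?r h ?a" for i
          using lcp_snoc[of u i v] False lu by (simp add: Ff_def)
        have Fu: "?F u = Af ?r h ?a + Wf ?r h (Suc k) - Wf ?r h ?a" using lu by (simp add: Ff_def)
        have kh: "Suc k < h" using \<open>length u < h\<close> lu by simp
        have U1: "Uf ?r h (Suc k) = ?r + 1 + ?r * Uf ?r h (Suc (Suc k))" using U_rec[OF kh] .
        have W1: "Wf ?r h (Suc k) = Wf ?r h k + Uf ?r h (Suc k)" by (rule W_Suc)
        have W2: "Wf ?r h (Suc (Suc k)) = Wf ?r h (Suc k) + Uf ?r h (Suc (Suc k))" by (rule W_Suc)
        have "?F u = 1 + ((Af ?r h ?a + Wf ?r h k - Wf ?r h ?a) + ?r * (Af ?r h ?a + Wf ?r h (Suc (Suc k)) - Wf ?r h ?a)) / (?r + 1)"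
          unfolding Fu by (rule alg_B2[OF r1 U1 W1 W2])
        then show ?thesis using S sN cN Fb Fi by simp
      qed
    next
      case False
      then have luh: "length u = h" using u by (simp add: tree_verts_def)
      have N: "?N = {butlast u}" using une False u by (simp add: nbrs_eq)
      let ?a = "lcp u v"
      have alt: "?a < length u"
      proof (rule ccontr)
        assume "\<not> ?a < length u"
        then have "?a = length u" using lcp_le[of u v] by simp
        then have "u = take (length u) v" by (rule lcp_full)
        then show False using uv luh lv by simp
      qed
      have Fb: "?F (butlast u) = Af ?r h ?a + Wf ?r h k - Wf ?r h ?a"
        using lcp_butlast[OF une, of v] alt lu by (simp add: Ff_def)
      have Fu: "?F u = Af ?r h ?a + Wf ?r h (Suc k) - Wf ?r h ?a" using lu by (simp add: Ff_def)
      have W1: "Wf ?r h (Suc k) = Wf ?r h k + Uf ?r h (Suc k)" by (rule W_Suc)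
      have "Uf ?r h (Suc k) = 1" using U_h[of ?r h] luh lu by simp
      then show ?thesis using S N Fb Fu W1 by simp
    qed
  qed
qed


lemma F_nn: "d \<ge> 1 \<Longrightarrow> Ff (real d) h v u \<ge> 0"
proof -
  assume d: "d \<ge> 1"
  have "Af (real d) h (lcp u v) \<ge> 0" using d by (intro A_nn) simp
  moreover have "Wf (real d) h (lcp u v) \<le> Wf (real d) h (length u)" using lcp_le[of u v] by (intro W_mono) auto
  ultimately show ?thesis by (simp add: Ff_def)
qed

lemma F_take: "m \<le> length v \<Longrightarrow> Ff r h v (take m v) = Af r h m"
  using lcp_take[of m v] by (simp add: Ff_def)

theorem mainTheorem8:
  fixes d h l :: nat and v :: "nat list"
  assumes "d \<ge> 1" and "h \<ge> 1"
    and "v \<in> tree_verts d h" and "length v = h"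
    and "l \<le> h"
  shows "summable (\<lambda>n. real n * first_hit_prob d h (take (h - l) v) v n)
     \<and> hitting_time d h (take (h - l) v) v = g_fun h h (real d) - g_fun h (h - l) (real d)"
proof -
  note a = assms
  interpret hc: hchain "tree_verts d h" "srw_trans d h" v "\<lambda>n x. first_hit_prob d h x v n" "Ff (real d) h v"
  proof
    show "finite (tree_verts d h)" by (rule finite_V)
    show "v \<in> tree_verts d h" by (rule a(3))
    show "\<And>x w. 0 \<le> srw_trans d h x w" by (simp add: srw_trans_def)
    show "\<And>x. x \<in> tree_verts d h \<Longrightarrow> (\<Sum>w\<in>tree_verts d h. srw_trans d h x w) = 1"
      using a by (intro Psum1) auto
    show "\<And>x. x \<in> tree_verts d h \<Longrightarrow> first_hit_prob d h x v 0 = (if x = v then 1 else 0)"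
      by (rule fhp0)
    show "\<And>x n. x \<in> tree_verts d h \<Longrightarrow> first_hit_prob d h x v (Suc n) =
       (if x = v then 0 else (\<Sum>w\<in>tree_verts d h. srw_trans d h x w * first_hit_prob d h w v n))"
      by (rule fhpS)
    show "\<And>x n. x \<in> tree_verts d h \<Longrightarrow> 0 \<le> first_hit_prob d h x v n" by (rule fhp_nn)
    show "Ff (real d) h v v = 0" using F_take[of h v "real d" h] a(4) by (simp add: A_h)
    show "\<And>x. x \<in> tree_verts d h \<Longrightarrow> 0 \<le> Ff (real d) h v x" using a(1) by (rule F_nn)
    show "\<And>x. x \<in> tree_verts d h \<Longrightarrow> x \<noteq> v \<Longrightarrow>
      Ff (real d) h v x = 1 + (\<Sum>w\<in>tree_verts d h. srw_trans d h x w * Ff (real d) h v w)"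
      using a by (intro harm) auto
  qed
  let ?x = "take (h - l) v"
  have xV: "?x \<in> tree_verts d h" using a(3)
    by (auto simp: tree_verts_def dest: in_set_takeD)
  have s: "(\<lambda>n. real n * first_hit_prob d h ?x v n) sums Ff (real d) h v ?x"
    by (rule hc.main_sums[OF xV])
  have "Ff (real d) h v ?x = g_fun h h (real d) - g_fun h (h - l) (real d)"
    using F_take[of "h - l" v "real d" h] a(4) A_g[of "h - l" h "real d"] by simp
  then show ?thesis using s by (simp add: hitting_time_def sums_summable sums_unique[symmetric])
qed

end
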